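(* Let $m=n=1$, $\boldsymbol s\in\{(1,-1),(-1,1)\}$, $\tilde{\boldsymbol s}=(s_2,s_1)$, $\boldsymbol z$ $h$-generic, let $y$ be a polynomial representing a solution of the BAE associated to $\boldsymbol s,\boldsymbol\lambda,\boldsymbol z,l$ and $\tilde y$ the polynomial with $y\,\tilde y[-s_1]=\varphi^{\boldsymbol s}-\psi^{\boldsymbol s}$. Define \[\mathcal R^{\boldsymbol s}(y)=\Big(1-\frac{T_1^{\boldsymbol s}y[s_1]}{T_1^{\boldsymbol s}[s_1]y}\tau\Big)^{s_1}\Big(1-\frac{T_2^{\boldsymbol s}y[-s_2]}{T_2^{\boldsymbol s}[s_2]y}\tau\Big)^{s_2},\] and $\mathcal R^{\tilde{\boldsymbol s}}(\tilde y)$ by the same formula with $\boldsymbol s,y,T^{\boldsymbol s}$ replaced by $\tilde{\boldsymbol s},\tilde y,T^{\tilde{\boldsymbol s}}$. If $\boldsymbol\lambda$ is typical, then $\mathcal R^{\boldsymbol s}(y)$ is a $(1|1)$-rational difference operator and $\mathcal R^{\boldsymbol s}(y)=\mathcal R^{\tilde{\boldsymbol s}}(\tilde y)$.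
   Context: Fix $h\in\mathbb{C}^\times$. $\mathbb{K}=\mathbb{C}(x)$, $f[i](x)=f(x-ih)$; $\mathbb{K}[\tau]$ difference operators with $\tau f=f[1]\tau$; $\mathbb{K}(\tau)$ its division ring of fractions. A fractional factorization $\mathcal R=\mathcal D_{\bar0}\mathcal D_{\bar1}^{-1}$ ($\mathcal D_{\bar0},\mathcal D_{\bar1}\in\mathbb{K}[\tau]$) is minimal if $\mathcal D_{\bar1}$ is monic of minimal order; $\mathcal R$ is a $(1|1)$-rational difference operator if in its minimal fractional factorization $\mathcal D_{\bar0},\mathcal D_{\bar1}$ are completely factorable over $\mathbb{K}$ (products of the leading coefficient and factors $\tau-g$, $g\in\mathbb{K}$), both have order $1$, and they have the same nonzero constant term. Polynomial $\mathfrak{gl}_{1|1}$ weights $\lambda^{(k)}$, $k=1,\dots,p$; their weights with respect to $\boldsymbol s$ (eigenvalues of $e_{\sigma(1)\sigma(1)},e_{\sigma(2)\sigma(2)}$ on the $\boldsymbol s$-highest weight vector, $\sigma$ the identity for $\boldsymbol s=(1,-1)$ and the transposition otherwise) are $(a_k,b_k)\in\mathbb{Z}^2_{\ge0}$ with $b_k=0$ if $a_k=0$; $\boldsymbol\lambda$ typical iff $a_k+b_k\ne0$ for some $k$. $\tilde a_k=b_k+1$, $\tilde b_k=a_k-1$ if $a_k+b_k\ne0$, else $\tilde a_k=\tilde b_k=0$. $\boldsymbol z$ $h$-generic. $T_1^{\boldsymbol s}=\prod_k\prod_{j=1}^{a_k}(x-z_k+s_1jh)$, $T_2^{\boldsymbol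 s}=\prod_k\prod_{j=1}^{b_k}(x-z_k+s_2jh)$, $T_1^{\tilde{\boldsymbol s}}=\prod_k\prod_{j=1}^{\tilde a_k}(x-z_k+\tilde s_1jh)$, $T_2^{\tilde{\boldsymbol s}}=\prod_k\prod_{j=1}^{\tilde b_k}(x-z_k+\tilde s_2jh)$. $\varphi^{\boldsymbol s}=\prod_{k:a_k+b_k\ne0}(x-z_k+s_1a_kh)$, $\psi^{\boldsymbol s}=\prod_{k:a_k+b_k\ne0}(x-z_k+s_2b_kh)$. BAE: $\prod_{k:a_k+b_k\ne0}\frac{t_j-z_k+s_1a_kh}{t_j-z_k+s_2b_kh}=1$, $j=1,\dots,l$, a root of multiplicity $r$ appearing at most $r$ times among the $t_j$; $y=\prod_j(x-t_j)$ represents the solution. *)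

theory Defs
  imports "HOL-Computational_Algebra.Computational_Algebra" "HOL-Computational_Algebra.Field_as_Ring"
begin

type_synonym K = "complex poly fract"

definition sp :: "complex \<Rightarrow> int \<Rightarrow> complex poly \<Rightarrow> complex poly" where
  "sp h i p = p \<circ>\<^sub>p [:- (of_int i * h), 1:]"

definition shiftK :: "complex \<Rightarrow> int \<Rightarrow> K \<Rightarrow> K" where
  "shiftK h i r = (case quot_of_fract r of (a, b) \<Rightarrow> to_fract (sp h i a) / to_fract (sp h i b))"

section \<open>Difference operators K[tau], with tau f = f[1] tau\<close>

text \<open>A difference operator sum_i c_i tau^i is represented by the K-polynomial with
  coefficients c_i; its order is the degree, its constant term is coeff 0.\<close>
type_synonym dop = "K poly"

definition dmult :: "complex \<Rightarrow> dop \<Rightarrow> dop \<Rightarrow> dop" where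
  "dmult h P Q = (\<Sum>i\<le>degree P. \<Sum>j\<le>degree Q.
      monom (coeff P i * shiftK h (int i) (coeff Q j)) (i + j))"

fun dprod :: "complex \<Rightarrow> K list \<Rightarrow> dop" where
  "dprod h [] = 1"
| "dprod h (g # gs) = dmult h [:- g, 1:] (dprod h gs)"

definition compl_factorable :: "complex \<Rightarrow> dop \<Rightarrow> bool" where
  "compl_factorable h D \<longleftrightarrow> (\<exists>c gs. D = dmult h [:c:] (dprod h gs))"

text \<open>RF P Q stands for P Q^(-1), LF Q P stands for Q^(-1) P (Q nonzero).\<close>
datatype fexpr = RF dop dop | LF dop dop

text \<open>Equality in the (left and right Ore) division ring of fractions K(tau).\<close>
fun feq :: "complex \<Rightarrow> fexpr \<Rightarrow> fexpr \<Rightarrow> bool" where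
  "feq h (RF P Q) (RF P' Q') \<longleftrightarrow>
     (\<exists>U U'. U \<noteq> 0 \<and> U' \<noteq> 0 \<and> dmult h Q U = dmult h Q' U' \<and> dmult h P U = dmult h P' U')"
| "feq h (LF Q P) (LF Q' P') \<longleftrightarrow>
     (\<exists>U U'. U \<noteq> 0 \<and> U' \<noteq> 0 \<and> dmult h U Q = dmult h U' Q' \<and> dmult h U P = dmult h U' P')"
| "feq h (LF Q P) (RF P' Q') \<longleftrightarrow> dmult h P Q' = dmult h Q P'"
| "feq h (RF P' Q') (LF Q P) \<longleftrightarrow> dmult h P Q' = dmult h Q P'"

text \<open>(1|1)-rational difference operator: in the minimal fractional factorization
  R = D0 D1^(-1) (D1 monic of minimal order), D0 and D1 are completely factorable,
  both of order 1, with the same nonzero constant term.\<close>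
definition minimal_ff :: "complex \<Rightarrow> fexpr \<Rightarrow> dop \<Rightarrow> dop \<Rightarrow> bool" where
  "minimal_ff h R D0 D1 \<longleftrightarrow> D1 \<noteq> 0 \<and> lead_coeff D1 = 1 \<and> feq h R (RF D0 D1) \<and>
     (\<forall>D0' D1'. D1' \<noteq> 0 \<longrightarrow> feq h R (RF D0' D1') \<longrightarrow> degree D1 \<le> degree D1')"

definition rational11 :: "complex \<Rightarrow> fexpr \<Rightarrow> bool" where
  "rational11 h R \<longleftrightarrow> (\<exists>D0 D1. minimal_ff h R D0 D1 \<and>
     compl_factorable h D0 \<and> compl_factorable h D1 \<and>
     degree D0 = 1 \<and> degree D1 = 1 \<and> coeff D0 0 = coeff D1 0 \<and> coeff D0 0 \<noteq> 0)"

definition h_generic :: "complex \<Rightarrow> nat \<Rightarrow> (nat \<Rightarrow> complex) \<Rightarrow> bool" where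
  "h_generic h p z \<longleftrightarrow> (\<forall>i\<in>{1..p}. \<forall>j\<in>{1..p}. i \<noteq> j \<longrightarrow> (\<forall>m::int. z i - z j \<noteq> of_int m * h))"

definition Tpoly :: "complex \<Rightarrow> nat \<Rightarrow> (nat \<Rightarrow> complex) \<Rightarrow> int \<Rightarrow> (nat \<Rightarrow> nat) \<Rightarrow> complex poly" where
  "Tpoly h p z sg c = (\<Prod>k\<in>{1..p}. \<Prod>j\<in>{1..c k}. [:- z k + of_int sg * of_nat j * h, 1:])"

definition typ_set :: "nat \<Rightarrow> (nat \<Rightarrow> nat) \<Rightarrow> (nat \<Rightarrow> nat) \<Rightarrow> nat set" where
  "typ_set p a b = {k\<in>{1..p}. a k + b k \<noteq> 0}"

definition phi_s :: "complex \<Rightarrow> nat \<Rightarrow> (nat \<Rightarrow> complex) \<Rightarrow> int \<Rightarrow> (nat \<Rightarrow> nat) \<Rightarrow> (nat \<Rightarrow> nat) \<Rightarrow> complex poly" where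
  "phi_s h p z s1 a b = (\<Prod>k\<in>typ_set p a b. [:- z k + of_int s1 * of_nat (a k) * h, 1:])"

definition psi_s :: "complex \<Rightarrow> nat \<Rightarrow> (nat \<Rightarrow> complex) \<Rightarrow> int \<Rightarrow> (nat \<Rightarrow> nat) \<Rightarrow> (nat \<Rightarrow> nat) \<Rightarrow> complex poly" where
  "psi_s h p z s2 a b = (\<Prod>k\<in>typ_set p a b. [:- z k + of_int s2 * of_nat (b k) * h, 1:])"

definition at_tilde :: "(nat \<Rightarrow> nat) \<Rightarrow> (nat \<Rightarrow> nat) \<Rightarrow> nat \<Rightarrow> nat" where
  "at_tilde a b k = (if a k + b k \<noteq> 0 then b k + 1 else 0)"

definition bt_tilde :: "(nat \<Rightarrow> nat) \<Rightarrow> (nat \<Rightarrow> nat) \<Rightarrow> nat \<Rightarrow> nat" where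
  "bt_tilde a b k = (if a k + b k \<noteq> 0 then a k - 1 else 0)"

definition BAE_sol :: "complex \<Rightarrow> nat \<Rightarrow> (nat \<Rightarrow> complex) \<Rightarrow> int \<Rightarrow> int \<Rightarrow> (nat \<Rightarrow> nat) \<Rightarrow> (nat \<Rightarrow> nat)
      \<Rightarrow> nat \<Rightarrow> (nat \<Rightarrow> complex) \<Rightarrow> bool" where
  "BAE_sol h p z s1 s2 a b l t \<longleftrightarrow>
     (\<forall>j\<in>{1..l}. (\<Prod>k\<in>typ_set p a b.
        (t j - z k + of_int s1 * of_nat (a k) * h) / (t j - z k + of_int s2 * of_nat (b k) * h)) = 1) \<and>
     (\<forall>j\<in>{1..l}. card {i\<in>{1..l}. t i = t j} \<le> order (t j) (phi_s h p z s1 a b - psi_s h p z s2 a b))"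

definition yrep :: "nat \<Rightarrow> (nat \<Rightarrow> complex) \<Rightarrow> complex poly" where
  "yrep l t = (\<Prod>j\<in>{1..l}. [:- t j, 1:])"

definition Rop :: "complex \<Rightarrow> int \<Rightarrow> int \<Rightarrow> complex poly \<Rightarrow> complex poly \<Rightarrow> complex poly \<Rightarrow> fexpr" where
  "Rop h s1 s2 T1 T2 y =
     (let A = to_fract (T1 * sp h s1 y) / to_fract (sp h s1 T1 * y);
          B = to_fract (T2 * sp h (- s2) y) / to_fract (sp h s2 T2 * y);
          F1 = [:1, - A:]; F2 = [:1, - B:]
      in if s1 = 1 then RF F1 F2 else LF F1 F2)"

end

theory Submission imports Defs begin

lemma sp_mult: "sp h i (p*q) = sp h i p * sp h i q" by (simp add: sp_def pcompose_mult)
lemma sp_add: "sp h i (p+q) = sp h i p + sp h i q" by (simp add: sp_def pcompose_add)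
lemma sp_diff: "sp h i (p-q) = sp h i p - sp h i q" by (simp add: sp_def pcompose_diff)
lemma sp_zero[simp]: "sp h i 0 = 0" by (simp add: sp_def)
lemma sp_one[simp]: "sp h i 1 = 1" by (simp add: sp_def pcompose_1)
lemma sp_prod: "sp h i (prod f A) = (\<Prod>x\<in>A. sp h i (f x))" by (simp add: sp_def pcompose_prod)
lemma sp_eq_0_iff[simp]: "sp h i p = 0 \<longleftrightarrow> p = 0"
  unfolding sp_def by (rule pcompose_eq_0_iff) simp
lemma sp_lin[simp]: "sp h i [:c, 1:] = [:c - of_int i * h, 1:]"
  by (simp add: sp_def pcompose_pCons)
lemma sp_sp: "sp h i (sp h j p) = sp h (i+j) p"
  unfolding sp_def pcompose_assoc[symmetric] by (simp add: pcompose_pCons algebra_simps)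
lemma sp_0: "sp h 0 p = p" by (simp add: sp_def)

lemma frac_eq: "(b::'a::idom) \<noteq> 0 \<Longrightarrow> d \<noteq> 0 \<Longrightarrow> a * d = c * b \<Longrightarrow> to_fract a / to_fract b = to_fract c / to_fract d"
  by (simp add: field_simps flip: to_fract_mult)

lemma fract_rep: "\<exists>a b. (b::complex poly) \<noteq> 0 \<and> x = to_fract a / to_fract b"
proof (intro exI conjI)
  show "snd (quot_of_fract x) \<noteq> 0" by simp
  show "x = to_fract (fst (quot_of_fract x)) / to_fract (snd (quot_of_fract x))"
    by (simp flip: Fract_conv_to_fract)
qed

lemma shiftK_frac: "shiftK h i (to_fract a / to_fract b) = to_fract (sp h i a) / to_fract (sp h i b)"
proof (cases "b = 0")
  case True then show ?thesis by (simp add: shiftK_def)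
next
  case False
  obtain a' b' where q: "quot_of_fract (to_fract a / to_fract b) = (a', b')" by (cases "quot_of_fract (to_fract a / to_fract b)")
  have b'0: "b' \<noteq> 0" using snd_quot_of_fract_nonzero[of "to_fract a / to_fract b"] q by simp
  have "to_fract a' / to_fract b' = to_fract a / to_fract b"
    using Fract_quot_of_fract[of "to_fract a / to_fract b"] q by (simp add: Fract_conv_to_fract)
  hence "a' * b = a * b'" using False b'0 by (simp add: field_simps flip: to_fract_mult)
  hence "sp h i a' * sp h i b = sp h i a * sp h i b'" by (simp flip: sp_mult)
  hence "to_fract (sp h i a') / to_fract (sp h i b') = to_fract (sp h i a) / to_fract (sp h i b)"
    using False b'0 by (intro frac_eq) auto
  thus ?thesis using q by (simp add: shiftK_def)
qed

lemma shiftK_tf: "shiftK h i (to_fract a) = to_fract (sp h i a)"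
  using shiftK_frac[of h i a 1] by simp

lemma shiftK_0[simp]: "shiftK h i 0 = 0" using shiftK_tf[of h i 0] by simp
lemma shiftK_1[simp]: "shiftK h i 1 = 1" using shiftK_tf[of h i 1] by simp

lemma shiftK_id[simp]: "shiftK h 0 x = x"
  using fract_rep[of x] by (auto simp: shiftK_frac sp_0)

lemma shiftK_shiftK: "shiftK h i (shiftK h j x) = shiftK h (j+i) x"
  using fract_rep[of x] by (auto simp: shiftK_frac sp_sp add.commute)

lemma shiftK_eq_0_iff[simp]: "shiftK h i x = 0 \<longleftrightarrow> x = 0"
  using fract_rep[of x] by (auto simp: shiftK_frac)

lemma shiftK_mult: "shiftK h i (x * y) = shiftK h i x * shiftK h i y"
proof -
  obtain a b where x: "b \<noteq> 0" "x = to_fract a / to_fract b" using fract_rep by blast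
  obtain c d where y: "d \<noteq> 0" "y = to_fract c / to_fract d" using fract_rep by blast
  have e: "x * y = to_fract (a*c) / to_fract (b*d)" using x y by simp
  show ?thesis apply (subst e) apply (simp only: x(2) y(2) shiftK_frac sp_mult) by simp
qed

lemma shiftK_inverse: "shiftK h i (inverse x) = inverse (shiftK h i x)"
proof -
  obtain a b where x: "b \<noteq> 0" "x = to_fract a / to_fract b" using fract_rep by blast
  have "inverse x = to_fract b / to_fract a" using x by simp
  thus ?thesis using x by (simp add: shiftK_frac)
qed

lemma shiftK_divide: "shiftK h i (x / y) = shiftK h i x / shiftK h i y"
  by (simp add: divide_inverse shiftK_mult shiftK_inverse)

lemma shiftK_uminus: "shiftK h i (- x) = - shiftK h i x"
proof -
  obtain a b where x: "b \<noteq> 0" "x = to_fract a / to_fract b" using fract_rep by blast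
  have e: "- x = to_fract (-a) / to_fract b" using x by simp
  show ?thesis apply (subst e) apply (simp only: x(2) shiftK_frac) by (simp add: sp_def pcompose_uminus)
qed


lemma coeff_dmult: "coeff (dmult h P Q) k = (\<Sum>i\<le>degree P. if i \<le> k then coeff P i * shiftK h (int i) (coeff Q (k - i)) else 0)"
proof -
  have inner: "(\<Sum>j\<le>degree Q. coeff (monom (coeff P i * shiftK h (int i) (coeff Q j)) (i + j)) k)
     = (if i \<le> k then coeff P i * shiftK h (int i) (coeff Q (k - i)) else 0)" for i
  proof (cases "i \<le> k \<and> k - i \<le> degree Q")
    case True
    have "(\<Sum>j\<le>degree Q. coeff (monom (coeff P i * shiftK h (int i) (coeff Q j)) (i + j)) k)
        = (\<Sum>j\<le>degree Q. if j = k - i then coeff P i * shiftK h (int i) (coeff Q j) else 0)"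
      by (rule sum.cong) (use True in \<open>auto simp: coeff_monom\<close>)
    also have "... = coeff P i * shiftK h (int i) (coeff Q (k-i))" using True by (simp add: sum.delta)
    finally show ?thesis using True by simp
  next
    case False
    then have "(\<Sum>j\<le>degree Q. coeff (monom (coeff P i * shiftK h (int i) (coeff Q j)) (i + j)) k) = 0"
      by (intro sum.neutral) (auto simp: coeff_monom)
    moreover have "(if i \<le> k then coeff P i * shiftK h (int i) (coeff Q (k - i)) else 0) = 0"
      using False by (auto simp: coeff_eq_0)
    ultimately show ?thesis by simp
  qed
  show ?thesis unfolding dmult_def by (simp only: coeff_sum inner)
qed

lemma coeff_dmult_N: assumes "degree P \<le> N"
  shows "coeff (dmult h P Q) k = (\<Sum>i\<le>N. if i \<le> k then coeff P i * shiftK h (int i) (coeff Q (k - i)) else 0)"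
  unfolding coeff_dmult
  by (rule sum.mono_neutral_left) (use assms in \<open>auto simp: coeff_eq_0\<close>)

lemma coeff_dmult_lin: assumes "degree P \<le> 1"
  shows "coeff (dmult h P Q) k = coeff P 0 * coeff Q k + (if 1 \<le> k then coeff P 1 * shiftK h 1 (coeff Q (k - 1)) else 0)"
  using coeff_dmult_N[OF assms, of h Q k] by (simp add: numeral_eq_Suc)

lemma coeff_dmult_const: "coeff (dmult h [:c:] Q) k = c * coeff Q k"
  using coeff_dmult_N[of "[:c:]" 0 h Q k] by simp

lemma dmult_const1: "dmult h [:1:] Q = Q"
  by (rule poly_eqI) (simp add: coeff_dmult_const)

lemma dmult_1_right: "dmult h P 1 = P"
proof (rule poly_eqI)
  fix k
  have "coeff (dmult h P 1) k = (\<Sum>i\<le>degree P. if i = k then coeff P i else 0)"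
    unfolding coeff_dmult by (rule sum.cong) (auto simp: coeff_1)
  also have "\<dots> = coeff P k" by (simp add: sum.delta' coeff_eq_0)
  finally show "coeff (dmult h P 1) k = coeff P k" .
qed

lemma dmult_top:
  assumes "P \<noteq> 0" "Q \<noteq> 0"
  shows "coeff (dmult h P Q) (degree P + degree Q) = lead_coeff P * shiftK h (int (degree P)) (lead_coeff Q)"
    and "k > degree P + degree Q \<Longrightarrow> coeff (dmult h P Q) k = 0"
proof -
  let ?f = "\<lambda>k i. if i \<le> k then coeff P i * shiftK h (int i) (coeff Q (k - i)) else 0"
  have "coeff (dmult h P Q) (degree P + degree Q) = ?f (degree P + degree Q) (degree P) + sum (?f (degree P + degree Q)) ({..degree P} - {degree P})"
    unfolding coeff_dmult by (rule sum.remove) auto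
  also have "sum (?f (degree P + degree Q)) ({..degree P} - {degree P}) = 0"
    by (rule sum.neutral) (auto simp: coeff_eq_0)
  finally show "coeff (dmult h P Q) (degree P + degree Q) = lead_coeff P * shiftK h (int (degree P)) (lead_coeff Q)" by simp
  assume "k > degree P + degree Q"
  then show "coeff (dmult h P Q) k = 0" unfolding coeff_dmult
    by (intro sum.neutral) (auto simp: coeff_eq_0)
qed

lemma dmult_top_ne0:
  assumes "P \<noteq> 0" "Q \<noteq> 0"
  shows "coeff (dmult h P Q) (degree P + degree Q) \<noteq> 0"
  using dmult_top(1)[OF assms, of h] assms by simp

lemma dmult_0_left[simp]: "dmult h 0 Q = 0"
  by (rule poly_eqI) (simp add: coeff_dmult)


lemma cases4: obtains "k = 0" | "k = 1" | "k = 2" | m where "k = Suc (Suc (Suc m))"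
  by (metis One_nat_def Suc_1 not0_implies_Suc)

lemma deg_lin[simp]: "degree [:a, b:] \<le> 1"
  by (simp add: degree_pCons_le)

lemma coeff_lin_U: "coeff (dmult h [:1, -X:] U) k = coeff U k - (if 1 \<le> k then X * shiftK h 1 (coeff U (k - 1)) else 0)"
  by (simp add: coeff_dmult_lin)

lemma least_nz: assumes "(U::'a::zero poly) \<noteq> 0" obtains m0 where "coeff U m0 \<noteq> 0" "\<forall>k<m0. coeff U k = 0"
proof -
  have ex: "\<exists>k. coeff U k \<noteq> 0" using assms by (auto simp: poly_eq_iff)
  let ?m = "LEAST k. coeff U k \<noteq> 0"
  have "coeff U ?m \<noteq> 0" using LeastI_ex[OF ex] .
  moreover have "\<forall>k<?m. coeff U k = 0" using not_less_Least by blast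
  ultimately show ?thesis using that by blast
qed

lemma shiftK_cancel: "shiftK h 1 (shiftK h (-1) x) = x"
  by (simp add: shiftK_shiftK)

lemma core_RF:
  fixes A B At Bt :: K
  assumes A0: "A \<noteq> 0" and B0: "B \<noteq> 0" and AB: "A \<noteq> B"
    and sm: "A + At = B + Bt" and prd: "Bt * shiftK h 1 B = At * shiftK h 1 A"
  shows "rational11 h (RF [:1,-A:] [:1,-B:]) \<and> feq h (RF [:1,-A:] [:1,-B:]) (LF [:1,-At:] [:1,-Bt:])"
proof
  show "feq h (RF [:1,-A:] [:1,-B:]) (LF [:1,-At:] [:1,-Bt:])"
    unfolding feq.simps
  proof (rule poly_eqI)
    fix k show "coeff (dmult h [:1,-Bt:] [:1,-B:]) k = coeff (dmult h [:1,-At:] [:1,-A:]) k"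
    proof (cases k rule: cases4)
      case 2 then show ?thesis using sm by (simp add: coeff_dmult_lin algebra_simps)
    next
      case 3 then show ?thesis using prd by (simp add: coeff_dmult_lin shiftK_uminus numeral_2_eq_2)
    qed (auto simp: coeff_dmult_lin)
  qed
  define c where "c = shiftK h (-1) (-1/B)"
  have c1: "shiftK h 1 c = -1/B" unfolding c_def by (rule shiftK_cancel)
  have c0: "c \<noteq> 0" unfolding c_def using B0 by simp
  have mff: "minimal_ff h (RF [:1,-A:] [:1,-B:]) [:c, A/B:] [:c, 1:]"
    unfolding minimal_ff_def
  proof (intro conjI allI impI)
    show "[:c, 1:] \<noteq> 0" by simp
    show "lead_coeff [:c, 1:] = 1" by simp
    show "feq h (RF [:1,-A:] [:1,-B:]) (RF [:c, A/B:] [:c, 1:])"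
      unfolding feq.simps
    proof (intro exI conjI)
      show "[:c:] \<noteq> 0" using c0 by simp
      show "(1::dop) \<noteq> 0" by simp
      show "dmult h [:1, - B:] [:c:] = dmult h [:c, 1:] 1"
        unfolding dmult_1_right
      proof (rule poly_eqI)
        fix k show "coeff (dmult h [:1, - B:] [:c:]) k = coeff [:c, 1:] k"
          using B0 by (cases k rule: cases4) (auto simp: coeff_dmult_lin c1 numeral_2_eq_2)
      qed
      show "dmult h [:1, - A:] [:c:] = dmult h [:c, A/B:] 1"
        unfolding dmult_1_right
      proof (rule poly_eqI)
        fix k show "coeff (dmult h [:1, - A:] [:c:]) k = coeff [:c, A/B:] k"
          using B0 by (cases k rule: cases4) (auto simp: coeff_dmult_lin c1 numeral_2_eq_2)
      qed
    qed
    fix D0' D1' assume D1'0: "D1' \<noteq> 0" and fq: "feq h (RF [:1,-A:] [:1,-B:]) (RF D0' D1')"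
    show "degree [:c,1:] \<le> degree D1'"
    proof (rule ccontr)
      assume "\<not> ?thesis"
      hence dg: "degree D1' = 0" by simp
      define d where "d = coeff D1' 0"
      have D1'e: "D1' = [:d:]" using dg d_def by (metis degree_0_id)
      have d0: "d \<noteq> 0" using D1'0 D1'e by auto
      from fq obtain U U' where U0: "U \<noteq> 0" and U'0: "U' \<noteq> 0"
        and e1: "dmult h [:1,-B:] U = dmult h D1' U'" and e2: "dmult h [:1,-A:] U = dmult h D0' U'" by auto
      define n where "n = degree U"
      have e1k: "coeff (dmult h [:1,-B:] U) k = d * coeff U' k" for k
        using e1 D1'e coeff_dmult_const by metis
      have top: "coeff (dmult h [:1,-X:] U) (Suc n) = - X * shiftK h 1 (lead_coeff U)" for X
        using coeff_lin_U[of h X U "Suc n"] by (simp add: n_def coeff_eq_0)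
      have high: "coeff (dmult h [:1,-X:] U) k = 0" if "k > Suc n" for X k
        using coeff_lin_U[of h X U k] that by (simp add: n_def coeff_eq_0)
      have lU: "shiftK h 1 (lead_coeff U) \<noteq> 0" using U0 by simp
      have "coeff U' (Suc n) \<noteq> 0" using e1k[of "Suc n"] top[of B] B0 lU by auto
      hence "Suc n \<le> degree U'" by (rule le_degree)
      moreover have "degree U' \<le> Suc n"
      proof (rule degree_le)
        show "\<forall>i>Suc n. coeff U' i = 0" using e1k high[of _ B] d0 by (metis mult_eq_0_iff)
      qed
      ultimately have dU': "degree U' = Suc n" by simp
      have D0'0: "D0' \<noteq> 0"
      proof
        assume "D0' = 0"
        hence "coeff (dmult h [:1,-A:] U) (Suc n) = 0" using e2 by simp
        thus False using top[of A] A0 lU by simp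
      qed
      have "degree D0' = 0"
      proof (rule ccontr)
        assume "degree D0' \<noteq> 0"
        hence "degree D0' + degree U' > Suc n" using dU' by simp
        hence "coeff (dmult h [:1,-A:] U) (degree D0' + degree U') = 0" by (rule high)
        thus False using e2 dmult_top_ne0[OF D0'0 U'0, of h] by simp
      qed
      define e where "e = coeff D0' 0"
      have D0'e: "D0' = [:e:]" using \<open>degree D0' = 0\<close> e_def by (metis degree_0_id)
      have e2k: "coeff (dmult h [:1,-A:] U) k = e * coeff U' k" for k
        using e2 D0'e coeff_dmult_const by metis
      have key: "e * coeff (dmult h [:1,-B:] U) k = d * coeff (dmult h [:1,-A:] U) k" for k
        using e1k e2k by (simp add: ac_simps)
      obtain m0 where m0: "coeff U m0 \<noteq> 0" "\<forall>k<m0. coeff U k = 0" using least_nz[OF U0] by blast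
      have low: "coeff (dmult h [:1,-X:] U) m0 = coeff U m0" for X
        using coeff_lin_U[of h X U m0] m0 by (cases m0) auto
      have "e = d" using key[of m0] low m0(1) by simp
      hence "A = B" using key[of "Suc n"] top d0 lU by simp
      with AB show False ..
    qed
  qed
  have cf1: "compl_factorable h [:c, 1:]"
    unfolding compl_factorable_def
    by (rule exI[of _ 1], rule exI[of _ "[-c]"]) (simp add: dmult_1_right dmult_const1 flip: One_nat_def)
  have cf0: "compl_factorable h [:c, A/B:]"
    unfolding compl_factorable_def
  proof (rule exI[of _ "A/B"], rule exI[of _ "[-(c*B/A)]"])
    show "[:c, A / B:] = dmult h [:A / B:] (dprod h [- (c * B / A)])"
    proof (rule poly_eqI)
      fix k show "coeff [:c, A / B:] k = coeff (dmult h [:A / B:] (dprod h [- (c * B / A)])) k"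
        using A0 B0 by (cases k rule: cases4) (auto simp: coeff_dmult_const dmult_1_right numeral_2_eq_2)
    qed
  qed
  show "rational11 h (RF [:1,-A:] [:1,-B:])"
    unfolding rational11_def
    apply (rule exI[of _ "[:c, A/B:]"], rule exI[of _ "[:c, 1:]"])
    using mff cf0 cf1 c0 A0 B0 by simp
qed

lemma core_LF:
  fixes A B At Bt :: K
  assumes A0: "A \<noteq> 0" and B0: "B \<noteq> 0" and AB: "A \<noteq> B" and At0: "At \<noteq> 0" and Bt0: "Bt \<noteq> 0"
    and sm: "A + At = B + Bt" and prd: "B * shiftK h 1 Bt = A * shiftK h 1 At"
  shows "rational11 h (LF [:1,-A:] [:1,-B:]) \<and> feq h (LF [:1,-A:] [:1,-B:]) (RF [:1,-At:] [:1,-Bt:])"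
proof
  show "feq h (LF [:1,-A:] [:1,-B:]) (RF [:1,-At:] [:1,-Bt:])"
    unfolding feq.simps
  proof (rule poly_eqI)
    fix k show "coeff (dmult h [:1,-B:] [:1,-Bt:]) k = coeff (dmult h [:1,-A:] [:1,-At:]) k"
    proof (cases k rule: cases4)
      case 2 then show ?thesis using sm by (simp add: coeff_dmult_lin algebra_simps)
    next
      case 3 then show ?thesis using prd by (simp add: coeff_dmult_lin shiftK_uminus numeral_2_eq_2)
    qed (auto simp: coeff_dmult_lin)
  qed
  define c where "c = shiftK h (-1) (-1/Bt)"
  have c1: "shiftK h 1 c = -1/Bt" unfolding c_def by (rule shiftK_cancel)
  have c0: "c \<noteq> 0" unfolding c_def using Bt0 by simp
  have sBt: "shiftK h 1 Bt \<noteq> 0" using Bt0 by simp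
  have mff: "minimal_ff h (LF [:1,-A:] [:1,-B:]) [:c, At/Bt:] [:c, 1:]"
    unfolding minimal_ff_def
  proof (intro conjI allI impI)
    show "[:c, 1:] \<noteq> 0" by simp
    show "lead_coeff [:c, 1:] = 1" by simp
    show "feq h (LF [:1,-A:] [:1,-B:]) (RF [:c, At/Bt:] [:c, 1:])"
      unfolding feq.simps
    proof (rule poly_eqI)
      fix k show "coeff (dmult h [:1, - B:] [:c, 1:]) k = coeff (dmult h [:1, - A:] [:c, At / Bt:]) k"
      proof (cases k rule: cases4)
        case 2 then show ?thesis using sm Bt0 by (simp add: coeff_dmult_lin c1 field_simps)
      next
        case 3 then show ?thesis using prd Bt0 sBt
          by (simp add: coeff_dmult_lin numeral_2_eq_2 shiftK_divide field_simps)
      qed (auto simp: coeff_dmult_lin)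
    qed
    fix D0' D1' assume D1'0: "D1' \<noteq> 0" and fq: "feq h (LF [:1,-A:] [:1,-B:]) (RF D0' D1')"
    show "degree [:c,1:] \<le> degree D1'"
    proof (rule ccontr)
      assume "\<not> ?thesis"
      hence dg: "degree D1' = 0" by simp
      define d where "d = coeff D1' 0"
      have D1'e: "D1' = [:d:]" using dg d_def by (metis degree_0_id)
      have d0: "d \<noteq> 0" using D1'0 D1'e by auto
      from fq have e: "dmult h [:1,-B:] [:d:] = dmult h [:1,-A:] D0'" using D1'e by simp
      have lhs: "coeff (dmult h [:1,-B:] [:d:]) k = (if k = 0 then d else if k = 1 then - B * shiftK h 1 d else 0)" for k
        by (cases k rule: cases4) (auto simp: coeff_dmult_lin numeral_2_eq_2)
      have D0'0: "D0' \<noteq> 0"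
      proof
        assume "D0' = 0"
        hence "coeff (dmult h [:1,-B:] [:d:]) 0 = 0" using e by (simp add: coeff_lin_U)
        thus False using lhs[of 0] d0 by simp
      qed
      define m where "m = degree D0'"
      have "coeff (dmult h [:1,-A:] D0') (Suc m) = - A * shiftK h 1 (lead_coeff D0')"
        using coeff_lin_U[of h A D0' "Suc m"] by (simp add: m_def coeff_eq_0)
      hence "coeff (dmult h [:1,-A:] D0') (Suc m) \<noteq> 0" using A0 D0'0 by simp
      hence "Suc m \<le> 1" using e lhs[of "Suc m"] by (auto split: if_splits)
      hence "degree D0' = 0" by (simp add: m_def)
      define f where "f = coeff D0' 0"
      have D0'e: "D0' = [:f:]" using \<open>degree D0' = 0\<close> f_def by (metis degree_0_id)
      have "d = f" using e lhs[of 0] D0'e coeff_lin_U[of h A "[:f:]" 0] by simp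
      moreover have "- B * shiftK h 1 d = - A * shiftK h 1 f"
        using e lhs[of 1] D0'e coeff_lin_U[of h A "[:f:]" 1] by simp
      ultimately have "A = B" using d0 by simp
      with AB show False ..
    qed
  qed
  have cf1: "compl_factorable h [:c, 1:]"
    unfolding compl_factorable_def
    by (rule exI[of _ 1], rule exI[of _ "[-c]"]) (simp add: dmult_1_right dmult_const1 flip: One_nat_def)
  have cf0: "compl_factorable h [:c, At/Bt:]"
    unfolding compl_factorable_def
  proof (rule exI[of _ "At/Bt"], rule exI[of _ "[-(c*Bt/At)]"])
    show "[:c, At / Bt:] = dmult h [:At / Bt:] (dprod h [- (c * Bt / At)])"
    proof (rule poly_eqI)
      fix k show "coeff [:c, At / Bt:] k = coeff (dmult h [:At / Bt:] (dprod h [- (c * Bt / At)])) k"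
        using At0 Bt0 by (cases k rule: cases4) (auto simp: coeff_dmult_const dmult_1_right numeral_2_eq_2)
    qed
  qed
  show "rational11 h (LF [:1,-A:] [:1,-B:])"
    unfolding rational11_def
    apply (rule exI[of _ "[:c, At/Bt:]"], rule exI[of _ "[:c, 1:]"])
    using mff cf0 cf1 c0 At0 Bt0 by simp
qed


lemma tele0:
  fixes f g :: "nat \<Rightarrow> 'a::comm_ring_1"
  assumes "\<And>j. g (Suc j) = f j"
  shows "(\<Prod>j\<in>{1..c}. f j) * f 0 = f c * (\<Prod>j\<in>{1..c}. g j)"
proof (induction c)
  case 0 then show ?case by simp
next
  case (Suc c)
  have "(\<Prod>j\<in>{1..Suc c}. f j) * f 0 = f (Suc c) * ((\<Prod>j\<in>{1..c}. f j) * f 0)"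
    by (simp add: prod.cl_ivl_Suc ac_simps)
  also have "\<dots> = f (Suc c) * (f c * (\<Prod>j\<in>{1..c}. g j))" by (simp only: Suc.IH)
  also have "\<dots> = f (Suc c) * (\<Prod>j\<in>{1..Suc c}. g j)" by (simp add: prod.cl_ivl_Suc assms ac_simps)
  finally show ?case .
qed

lemma tele1:
  fixes \<sigma> :: int and w h :: complex
  shows "(\<Prod>j\<in>{1..c}. [:- w + of_int \<sigma> * of_nat j * h, 1:]) * [:- w, 1:]
       = [:- w + of_int \<sigma> * of_nat c * h, 1:] * (\<Prod>j\<in>{1..c}. sp h \<sigma> [:- w + of_int \<sigma> * of_nat j * h, 1:])"
  using tele0[of "\<lambda>j. sp h \<sigma> [:- w + of_int \<sigma> * of_nat j * h, 1:]" "\<lambda>j. [:- w + of_int \<sigma> * of_nat j * h, 1:]" c]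
  by (simp add: algebra_simps del: sp_lin) (simp add: algebra_simps)

definition rho :: "nat \<Rightarrow> (nat \<Rightarrow> complex) \<Rightarrow> complex poly" where
  "rho p z = (\<Prod>k\<in>{1..p}. [:- z k, 1:])"

definition Phi :: "complex \<Rightarrow> nat \<Rightarrow> (nat \<Rightarrow> complex) \<Rightarrow> int \<Rightarrow> (nat \<Rightarrow> nat) \<Rightarrow> complex poly" where
  "Phi h p z \<sigma> c = (\<Prod>k\<in>{1..p}. [:- z k + of_int \<sigma> * of_nat (c k) * h, 1:])"

lemma Tpoly_tele: "Tpoly h p z \<sigma> c * rho p z = Phi h p z \<sigma> c * sp h \<sigma> (Tpoly h p z \<sigma> c)"
  unfolding Tpoly_def rho_def Phi_def sp_prod prod.distrib[symmetric]
  by (rule prod.cong[OF refl], rule tele1)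

lemma lin_nz[simp]: "[:c, 1:] \<noteq> (0::complex poly)" by simp

lemma Tpoly_nz: "Tpoly h p z \<sigma> c \<noteq> 0" unfolding Tpoly_def by (simp add: prod_zero_iff)
lemma rho_nz: "rho p z \<noteq> 0" unfolding rho_def by (simp add: prod_zero_iff)

lemma ratio:
  assumes "y \<noteq> 0"
  shows "to_fract (Tpoly h p z \<sigma> c * w) / to_fract (sp h \<sigma> (Tpoly h p z \<sigma> c) * y)
       = to_fract (Phi h p z \<sigma> c * w) / to_fract (rho p z * y)"
proof (rule frac_eq)
  show "sp h \<sigma> (Tpoly h p z \<sigma> c) * y \<noteq> 0" using assms Tpoly_nz by simp
  show "rho p z * y \<noteq> 0" using assms rho_nz by simp
  have "Tpoly h p z \<sigma> c * w * (rho p z * y) = (Tpoly h p z \<sigma> c * rho p z) * (w * y)" by (simp add: ac_simps)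
  also have "\<dots> = (Phi h p z \<sigma> c * sp h \<sigma> (Tpoly h p z \<sigma> c)) * (w * y)" by (simp only: Tpoly_tele)
  also have "\<dots> = Phi h p z \<sigma> c * w * (sp h \<sigma> (Tpoly h p z \<sigma> c) * y)" by (simp add: ac_simps)
  finally show "Tpoly h p z \<sigma> c * w * (rho p z * y) = Phi h p z \<sigma> c * w * (sp h \<sigma> (Tpoly h p z \<sigma> c) * y)" .
qed

lemma Phi_split:
  fixes p :: nat and z :: "nat \<Rightarrow> complex" and f g :: "nat \<Rightarrow> complex poly"
  assumes "Ty \<subseteq> {1..p}" "\<And>k. k \<in> Ty \<Longrightarrow> f k = g k" "\<And>k. k \<in> {1..p} - Ty \<Longrightarrow> f k = [:- z k, 1:]"
  shows "(\<Prod>k\<in>{1..p}. f k) = (\<Prod>k\<in>Ty. g k) * (\<Prod>k\<in>{1..p} - Ty. [:- z k, 1:])"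
proof -
  have "(\<Prod>k\<in>{1..p}. f k) = (\<Prod>k\<in>{1..p} - Ty. f k) * (\<Prod>k\<in>Ty. f k)"
    using assms(1) by (intro prod.subset_diff) auto
  also have "\<dots> = (\<Prod>k\<in>{1..p} - Ty. [:- z k, 1:]) * (\<Prod>k\<in>Ty. g k)"
    using assms(2,3) by (intro arg_cong2[where f="(*)"] prod.cong) auto
  finally show ?thesis by (simp add: ac_simps)
qed

lemma frac_diff: "to_fract a / to_fract b - to_fract c / to_fract b = to_fract (a - c) / to_fract b"
  by (simp add: diff_divide_distrib)


lemma phi_ne_psi:
  assumes h0: "h \<noteq> 0" and s: "s1 = 1 \<or> s1 = -1" and s2: "s2 = - s1"
    and gen: "h_generic h p z" and k0: "k0 \<in> {1..p}" "a k0 + b k0 \<noteq> 0"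
  shows "phi_s h p z s1 a b \<noteq> psi_s h p z s2 a b"
proof
  assume eq: "phi_s h p z s1 a b = psi_s h p z s2 a b"
  define x0 where "x0 = z k0 - of_int s1 * of_nat (a k0) * h"
  have fin: "finite (typ_set p a b)" by (auto simp: typ_set_def)
  have k0T: "k0 \<in> typ_set p a b" using k0 by (auto simp: typ_set_def)
  have "poly (phi_s h p z s1 a b) x0 = 0"
    unfolding phi_s_def poly_prod using fin k0T by (auto simp: prod_zero_iff x0_def intro!: bexI[of _ k0])
  moreover have "poly (psi_s h p z s2 a b) x0 \<noteq> 0"
    unfolding psi_s_def poly_prod
  proof (subst prod_zero_iff[OF fin], rule notI, elim bexE)
    fix k assume kT: "k \<in> typ_set p a b" and z0: "poly [:- z k + of_int s2 * of_nat (b k) * h, 1:] x0 = 0"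
    have z0': "z k0 - z k = of_int (s1 * int (a k0) - s2 * int (b k)) * h"
      using z0 by (simp add: x0_def algebra_simps)
    show False
    proof (cases "k = k0")
      case True
      have "of_int s1 * (of_nat (a k0) + of_nat (b k0)) * h = (0::complex)"
        using z0' True s2 by (simp add: algebra_simps)
      moreover have "(of_nat (a k0) + of_nat (b k0) :: complex) \<noteq> 0"
        using k0(2) by (metis of_nat_add of_nat_eq_0_iff)
      moreover have "(of_int s1 :: complex) \<noteq> 0" using s by auto
      ultimately show False using h0 by simp
    next
      case False
      have "k \<in> {1..p}" using kT by (auto simp: typ_set_def)
      then show False using gen k0(1) False z0' unfolding h_generic_def by metis
    qed
  qed
  ultimately show False using eq by simp
qed

theorem lemma4p5:
  fixes h :: complex and p l :: nat and z t :: "nat \<Rightarrow> complex" and a b :: "nat \<Rightarrow> nat"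
    and s1 s2 :: int and yt :: "complex poly"
  assumes "h \<noteq> 0"
    and "(s1 = 1 \<and> s2 = -1) \<or> (s1 = -1 \<and> s2 = 1)"
    and "\<And>k. k \<in> {1..p} \<Longrightarrow> a k = 0 \<Longrightarrow> b k = 0"
    and "h_generic h p z"
    and "BAE_sol h p z s1 s2 a b l t"
    and "yrep l t * sp h (- s1) yt = phi_s h p z s1 a b - psi_s h p z s2 a b"
    and "\<exists>k\<in>{1..p}. a k + b k \<noteq> 0"
  shows "rational11 h (Rop h s1 s2 (Tpoly h p z s1 a) (Tpoly h p z s2 b) (yrep l t)) \<and>
         feq h (Rop h s1 s2 (Tpoly h p z s1 a) (Tpoly h p z s2 b) (yrep l t))
               (Rop h s2 s1 (Tpoly h p z s2 (at_tilde a b)) (Tpoly h p z s1 (bt_tilde a b)) yt)"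
proof -
  have s2: "s2 = - s1" using assms(2) by auto
  have s1c: "s1 = 1 \<or> s1 = -1" using assms(2) by auto
  define y where "y = yrep l t"
  define Ty where "Ty = typ_set p a b"
  define N where "N = (\<Prod>k\<in>{1..p} - Ty. [:- z k, 1:])"
  define ph where "ph = phi_s h p z s1 a b"
  define ps where "ps = psi_s h p z s2 a b"
  have TySub: "Ty \<subseteq> {1..p}" by (auto simp: Ty_def typ_set_def)
  have finTy: "finite Ty" using TySub finite_subset by blast
  have nonTy: "a k = 0 \<and> b k = 0" if "k \<in> {1..p} - Ty" for k using that by (auto simp: Ty_def typ_set_def)
  have nA: "a k = 0" and nB: "b k = 0" if "1 \<le> k" "k \<le> p" "k \<notin> Ty" for k using that nonTy by auto
  have inTy: "a k \<ge> 1 \<and> a k + b k \<noteq> 0" if "k \<in> Ty" for k using that assms(3) by (fastforce simp: Ty_def typ_set_def)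
  have Phi1: "Phi h p z s1 a = ph * N"
    unfolding Phi_def ph_def phi_s_def N_def Ty_def[symmetric]
    by (rule Phi_split[OF TySub]) (auto simp: nA nB)
  have Phi2: "Phi h p z s2 b = ps * N"
    unfolding Phi_def ps_def psi_s_def N_def Ty_def[symmetric]
    by (rule Phi_split[OF TySub]) (auto simp: nA nB)
  have Phi3: "Phi h p z s2 (at_tilde a b) = sp h s1 ps * N"
    unfolding Phi_def ps_def psi_s_def N_def Ty_def[symmetric] sp_prod
    by (rule Phi_split[OF TySub]) (auto dest!: inTy simp: nA nB at_tilde_def s2 algebra_simps)
  have Phi4: "Phi h p z s1 (bt_tilde a b) = sp h s1 ph * N"
    unfolding Phi_def ph_def phi_s_def N_def Ty_def[symmetric] sp_prod
    by (rule Phi_split[OF TySub]) (auto dest!: inTy simp: nA nB bt_tilde_def of_nat_diff algebra_simps)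
  have y0: "y \<noteq> 0" unfolding y_def yrep_def by (simp add: prod_zero_iff)
  have N0: "N \<noteq> 0" unfolding N_def by (simp add: prod_zero_iff)
  have ph0: "ph \<noteq> 0" unfolding ph_def phi_s_def using finTy by (simp add: prod_zero_iff Ty_def[symmetric])
  have ps0: "ps \<noteq> 0" unfolding ps_def psi_s_def using finTy by (simp add: prod_zero_iff Ty_def[symmetric])
  obtain k0 where k0: "k0 \<in> {1..p}" "a k0 + b k0 \<noteq> 0" using assms(7) by blast
  have phps: "ph \<noteq> ps" unfolding ph_def ps_def by (rule phi_ne_psi[where a=a and b=b, OF assms(1) s1c s2 assms(4) k0])
  have rel: "y * sp h s2 yt = ph - ps" using assms(6) by (simp add: y_def ph_def ps_def s2)
  have yt0: "yt \<noteq> 0" using rel phps by auto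
  define A where "A = to_fract (Tpoly h p z s1 a * sp h s1 y) / to_fract (sp h s1 (Tpoly h p z s1 a) * y)"
  define B where "B = to_fract (Tpoly h p z s2 b * sp h (- s2) y) / to_fract (sp h s2 (Tpoly h p z s2 b) * y)"
  define At where "At = to_fract (Tpoly h p z s2 (at_tilde a b) * sp h s2 yt) / to_fract (sp h s2 (Tpoly h p z s2 (at_tilde a b)) * yt)"
  define Bt where "Bt = to_fract (Tpoly h p z s1 (bt_tilde a b) * sp h (- s1) yt) / to_fract (sp h s1 (Tpoly h p z s1 (bt_tilde a b)) * yt)"
  have R1: "Rop h s1 s2 (Tpoly h p z s1 a) (Tpoly h p z s2 b) y = (if s1 = 1 then RF [:1,-A:] [:1,-B:] else LF [:1,-A:] [:1,-B:])"
    by (simp add: Rop_def Let_def A_def B_def)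
  have R2: "Rop h s2 s1 (Tpoly h p z s2 (at_tilde a b)) (Tpoly h p z s1 (bt_tilde a b)) yt = (if s2 = 1 then RF [:1,-At:] [:1,-Bt:] else LF [:1,-At:] [:1,-Bt:])"
    by (simp add: Rop_def Let_def At_def Bt_def)
  have A': "A = to_fract (ph * N * sp h s1 y) / to_fract (rho p z * y)"
    by (simp only: A_def ratio[OF y0] Phi1)
  have B': "B = to_fract (ps * N * sp h s1 y) / to_fract (rho p z * y)"
    unfolding B_def ratio[OF y0] Phi2 using s2 by simp
  have At': "At = to_fract (sp h s1 ps * N * sp h s2 yt) / to_fract (rho p z * yt)"
    by (simp only: At_def ratio[OF yt0] Phi3)
  have Bt': "Bt = to_fract (sp h s1 ph * N * sp h s2 yt) / to_fract (rho p z * yt)"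
    unfolding Bt_def ratio[OF yt0] Phi4 using s2 by simp
  have A0: "A \<noteq> 0" using A' ph0 N0 y0 rho_nz by simp
  have B0: "B \<noteq> 0" using B' ps0 N0 y0 rho_nz by simp
  have At0: "At \<noteq> 0" using At' ps0 N0 yt0 rho_nz by simp
  have Bt0: "Bt \<noteq> 0" using Bt' ph0 N0 yt0 rho_nz by simp
  have AB: "A \<noteq> B"
  proof
    assume "A = B"
    hence "to_fract (ph * N * sp h s1 y) = to_fract (ps * N * sp h s1 y)"
      using A' B' rho_nz y0 by (metis divide_cancel_right mult_eq_0_iff to_fract_eq_0_iff)
    hence "ph * (N * sp h s1 y) = ps * (N * sp h s1 y)" by (simp add: ac_simps)
    hence "ph = ps" using N0 y0 by simp
    with phps show False ..
  qed
  have spsp: "sp h s1 (sp h s2 yt) = yt" using s2 by (simp add: sp_sp sp_0)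
  have d1: "A - B = to_fract (sp h s2 yt * N * sp h s1 y) / to_fract (rho p z)"
  proof -
    have "A - B = to_fract (ph * N * sp h s1 y - ps * N * sp h s1 y) / to_fract (rho p z * y)"
      unfolding A' B' by (rule frac_diff)
    also have "ph * N * sp h s1 y - ps * N * sp h s1 y = y * sp h s2 yt * N * sp h s1 y"
      unfolding rel by (simp add: algebra_simps)
    also have "to_fract \<dots> / to_fract (rho p z * y) = to_fract (sp h s2 yt * N * sp h s1 y) / to_fract (rho p z)"
      by (rule frac_eq) (use y0 rho_nz in \<open>auto simp: ac_simps\<close>)
    finally show ?thesis .
  qed
  have d2: "Bt - At = to_fract (sp h s2 yt * N * sp h s1 y) / to_fract (rho p z)"
  proof -
    have "Bt - At = to_fract (sp h s1 ph * N * sp h s2 yt - sp h s1 ps * N * sp h s2 yt) / to_fract (rho p z * yt)"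
      unfolding Bt' At' by (rule frac_diff)
    also have "sp h s1 ph * N * sp h s2 yt - sp h s1 ps * N * sp h s2 yt = sp h s1 y * yt * N * sp h s2 yt"
    proof -
      have "sp h s1 ph - sp h s1 ps = sp h s1 y * yt" by (simp flip: sp_diff rel add: sp_mult spsp)
      thus ?thesis by (simp add: algebra_simps flip: \<open>sp h s1 ph - sp h s1 ps = sp h s1 y * yt\<close>)
    qed
    also have "to_fract \<dots> / to_fract (rho p z * yt) = to_fract (sp h s2 yt * N * sp h s1 y) / to_fract (rho p z)"
      by (rule frac_eq) (use yt0 rho_nz in \<open>auto simp: ac_simps\<close>)
    finally show ?thesis .
  qed
  have sm: "A + At = B + Bt"
  proof -
    have "A - B = Bt - At" using d1 d2 by simp
    thus ?thesis by (simp add: algebra_simps)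
  qed
  have main: "rational11 h (Rop h s1 s2 (Tpoly h p z s1 a) (Tpoly h p z s2 b) y) \<and>
         feq h (Rop h s1 s2 (Tpoly h p z s1 a) (Tpoly h p z s2 b) y)
               (Rop h s2 s1 (Tpoly h p z s2 (at_tilde a b)) (Tpoly h p z s1 (bt_tilde a b)) yt)"
  proof (cases "s1 = 1")
    case True
    have ss: "s1 = 1" "s2 = -1" using True s2 by auto
    have prd: "Bt * shiftK h 1 B = At * shiftK h 1 A"
      unfolding A' B' At' Bt' ss shiftK_frac by (simp add: sp_mult ac_simps)
    show ?thesis unfolding R1 R2 using ss core_RF[OF A0 B0 AB sm prd] by simp
  next
    case False
    have ss: "s1 = -1" "s2 = 1" using False s1c s2 by auto
    have prd: "B * shiftK h 1 Bt = A * shiftK h 1 At"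
      unfolding A' B' At' Bt' ss shiftK_frac by (simp add: sp_mult sp_sp sp_0 ac_simps)
    show ?thesis unfolding R1 R2 using ss core_LF[OF A0 B0 AB At0 Bt0 sm prd] by simp
  qed
  then show ?thesis by (simp only: y_def)
qed

end
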